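(* In the setting described in the context, fix $t_0\in(0,T_0)$ and let $w_i$ be as defined there. If $i\,\dot\sim\, j$, then there exists a sequence $s_n\to T_0$, $s_n\in[t_0,T_0)$, such that $|w_i(s_n)-w_j(s_n)|\to 0$.
   Context: Setting: $N,d\ge 1$, $\alpha\in(0,1)$, $\psi(s)=s^{-\alpha}$ ($s>0$), $\psi(0)=0$; $\psi_n(s)=\psi(s)$ for $s\ge(n-1)^{-1/\alpha}$, $\psi_n(s)=n$ for $s\le n^{-1/\alpha}$, smooth and monotone in between. Fix $T>0$ and initial data $x(0),v(0)\in\mathbb{R}^{Nd}$; let $x^n$ be the $C^2$ solution on $[0,T]$ of $\dot x^n_i=v^n_i$, $\dot v^n_i=\frac1N\sum_k(v^n_k-v^n_i)\psi_n(|x^n_i-x^n_k|)$ with these data. Pass to a subsequence (not relabeled) with $x^n\to x$ uniformly on $[0,T]$. Let $B_i(0)=\{k: x_k(0)\ne x_i(0)\text{ or }v_k(0)\ne v_i(0)\}$ and $T_0:=\inf\{t>0:\min_{i,\ j\in B_i(0)}\lim_{n}|x^n_i(t)-x^n_j(t)|=0\}$; assume $T_0\le T$. Assume moreover (after a further subsequence) that $x^n\to x$ in $C^1([0,t])$ for every $t<T_0$, and set $v=\dot x$ on $[0,T_0)$. Define $i\,\dot\sim\, j$ iff $j\notin B_i(0)$ or $\int_t^{T_0}\psi(|x_i(s)-x_j(s)|)ds=\infty$ for all $t<T_0$; let $\sim$ be the equivalence relation generated by $\dot\sim$ (its transitive closure), with classes $[i]$. For fixed $t_0\in(0,T_0)$,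 $w_i=w_i^{t_0}$ ($i=1,\dots,N$) is the solution on $[t_0,T_0)$ of $\dot w_i=\frac1N\sum_{k\in[i]}(w_k-w_i)\psi(|x_i-x_k|)$ with $w_i(t_0)=v_i(t_0)$. *)

theory Defs
  imports "HOL-Analysis.Analysis"
begin

definition psi :: "real \<Rightarrow> real \<Rightarrow> real" where
  "psi \<alpha> s = (if s = 0 then 0 else s powr (- \<alpha>))"

definition Bset :: "('i \<Rightarrow> 'v) \<Rightarrow> ('i \<Rightarrow> 'v) \<Rightarrow> 'i \<Rightarrow> 'i set" where
  "Bset x0 v0 i = {k. x0 k \<noteq> x0 i \<or> v0 k \<noteq> v0 i}"

definition dotsim :: "real \<Rightarrow> ('i \<Rightarrow> real ^ 'd) \<Rightarrow> ('i \<Rightarrow> real ^ 'd)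
    \<Rightarrow> (real \<Rightarrow> 'i \<Rightarrow> real ^ 'd) \<Rightarrow> real \<Rightarrow> 'i \<Rightarrow> 'i \<Rightarrow> bool" where
  "dotsim \<alpha> x0 v0 x T0 i j \<longleftrightarrow>
     j \<notin> Bset x0 v0 i \<or>
     (\<forall>t\<in>{0..<T0}. (\<integral>\<^sup>+ s\<in>{t..<T0}. ennreal (psi \<alpha> (norm (x s i - x s j))) \<partial>lborel) = \<infinity>)"

definition simrel :: "real \<Rightarrow> ('i \<Rightarrow> real ^ 'd) \<Rightarrow> ('i \<Rightarrow> real ^ 'd)
    \<Rightarrow> (real \<Rightarrow> 'i \<Rightarrow> real ^ 'd) \<Rightarrow> real \<Rightarrow> 'i \<Rightarrow> 'i \<Rightarrow> bool" where
  "simrel \<alpha> x0 v0 x T0 = equivclp (dotsim \<alpha> x0 v0 x T0)"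

definition simclass :: "real \<Rightarrow> ('i \<Rightarrow> real ^ 'd) \<Rightarrow> ('i \<Rightarrow> real ^ 'd)
    \<Rightarrow> (real \<Rightarrow> 'i \<Rightarrow> real ^ 'd) \<Rightarrow> real \<Rightarrow> 'i \<Rightarrow> 'i set" where
  "simclass \<alpha> x0 v0 x T0 i = {k. simrel \<alpha> x0 v0 x T0 i k}"

end

theory Submission
  imports Defs
begin

lemma gronwall_zero:
  fixes f f' :: "real \<Rightarrow> real"
  assumes ab: "a \<le> b" and d: "\<And>t. t\<in>{a..b} \<Longrightarrow> (f has_real_derivative f' t) (at t within {a..b})"
    and le: "\<And>t. t\<in>{a..b} \<Longrightarrow> f' t \<le> K * f t" and f0: "f a = 0"
    and nn: "\<And>t. t\<in>{a..b} \<Longrightarrow> 0 \<le> f t" and t: "t\<in>{a..b}"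
  shows "f t = 0"
proof -
  define h where "h s = exp (- K * s) * f s" for s
  define h' where "h' s = exp (- K * s) * f' s - K * exp (- K * s) * f s" for s
  have hd: "(h has_vector_derivative h' s) (at s within {a..t})" if "s \<in> {a..t}" for s
  proof -
    have s: "s \<in> {a..b}" using that t by auto
    have "(f has_real_derivative f' s) (at s within {a..t})"
      using d[OF s] by (rule DERIV_subset) (use t in auto)
    then have "(h has_real_derivative (exp (- K * s) * f' s + (- K * exp (- K * s)) * f s)) (at s within {a..t})"
      unfolding h_def
      by (auto intro!: derivative_eq_intros)
    then show ?thesis unfolding h'_def has_real_derivative_iff_has_vector_derivative[symmetric]
      by (simp add: algebra_simps)
  qed
  have I: "(h' has_integral h t - h a) {a..t}"
    by (rule fundamental_theorem_of_calculus) (use t hd in auto)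
  have "h' s \<le> 0" if "s \<in> {a..t}" for s
  proof -
    have s: "s \<in> {a..b}" using that t by auto
    have "exp (- K * s) * f' s \<le> exp (- K * s) * (K * f s)" using le[OF s] by simp
    then show ?thesis unfolding h'_def by (simp add: algebra_simps)
  qed
  then have "h t - h a \<le> 0"
    using has_integral_le[OF I has_integral_0] by auto
  then have "f t \<le> 0" using f0 unfolding h_def by (simp add: mult_le_0_iff)
  then show ?thesis using nn[OF t] by auto
qed


lemma lipschitz_aux:
  fixes g :: "real \<Rightarrow> real"
  assumes a: "0 < a" and near: "\<And>s. 0 \<le> s \<Longrightarrow> s \<le> a \<Longrightarrow> g s = c"
    and dg: "\<And>s. 0 < s \<Longrightarrow> g differentiable (at s)"
    and ddg: "\<And>s. 0 < s \<Longrightarrow> deriv g differentiable (at s)"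
  shows "\<exists>L\<ge>0. \<forall>s1\<in>{0..R}. \<forall>s2\<in>{0..R}. \<bar>g s1 - g s2\<bar> \<le> L * \<bar>s1 - s2\<bar>"
proof -
  define R' where "R' = max a R"
  have "continuous_on {a..R'} (deriv g)"
    using ddg a by (intro continuous_at_imp_continuous_on) (auto intro!: differentiable_imp_continuous_within)
  then have "compact (deriv g ` {a..R'})" by (rule compact_continuous_image) simp
  then obtain L where L: "L > 0" "\<And>y. y \<in> deriv g ` {a..R'} \<Longrightarrow> norm y \<le> L"
    using compact_imp_bounded bounded_pos by metis
  have key: "\<bar>g u - g v\<bar> \<le> L * \<bar>u - v\<bar>" if "u \<in> {a..R'}" "v \<in> {a..R'}" "u < v" for u v
  proof -
    have "\<exists>z. u < z \<and> z < v \<and> g v - g u = (v - u) * deriv g z"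
      apply (rule MVT2[OF \<open>u < v\<close>])
      using that a dg by (auto simp: DERIV_deriv_iff_real_differentiable)
    then obtain z where z: "u < z" "z < v" "g v - g u = (v - u) * deriv g z" by blast
    have "\<bar>deriv g z\<bar> \<le> L" using L(2)[of "deriv g z"] z that by auto
    then have "\<bar>(v - u) * deriv g z\<bar> \<le> L * \<bar>u - v\<bar>" using \<open>u < v\<close>
      by (simp add: abs_mult mult.commute mult_right_mono)
    then show ?thesis using z(3) by (simp add: abs_minus_commute)
  qed
  define p where "p s = max a s" for s
  have gp: "g s = g (p s)" if "0 \<le> s" for s
    using near[OF that] near[of a] a unfolding p_def by (cases "s \<le> a") auto
  have "\<bar>g s1 - g s2\<bar> \<le> L * \<bar>s1 - s2\<bar>" if "s1 \<in> {0..R}" "s2 \<in> {0..R}" for s1 s2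
  proof -
    have pin: "p s1 \<in> {a..R'}" "p s2 \<in> {a..R'}" using that unfolding p_def R'_def by auto
    have pd: "\<bar>p s1 - p s2\<bar> \<le> \<bar>s1 - s2\<bar>" unfolding p_def by auto
    have "\<bar>g (p s1) - g (p s2)\<bar> \<le> L * \<bar>p s1 - p s2\<bar>"
    proof (cases "p s1 = p s2")
      case False
      then show ?thesis
      proof (cases "p s1 < p s2")
        case True then show ?thesis using key pin by auto
      next
        case False then have "p s2 < p s1" using \<open>p s1 \<noteq> p s2\<close> by auto
        then show ?thesis using key[of "p s2" "p s1"] pin by (simp add: abs_minus_commute)
      qed
    qed simp
    also have "\<dots> \<le> L * \<bar>s1 - s2\<bar>" using pd L by (simp add: mult_left_mono)
    finally show ?thesis using gp that by auto
  qed
  then show ?thesis using L by (intro exI[of _ L]) auto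
qed


lemma inner_deriv:
  fixes D :: "real \<Rightarrow> 'a::real_inner"
  assumes "(D has_vector_derivative D') (at t within S)"
  shows "((\<lambda>s. D s \<bullet> D s) has_real_derivative 2 * (D t \<bullet> D')) (at t within S)"
proof -
  have "((\<lambda>s. D s \<bullet> D s) has_derivative (\<lambda>h. D t \<bullet> (h *\<^sub>R D') + (h *\<^sub>R D') \<bullet> D t)) (at t within S)"
    using assms unfolding has_vector_derivative_def by (intro has_derivative_inner) auto
  then show ?thesis unfolding has_field_derivative_def
    by (rule has_derivative_eq_rhs) (auto simp: inner_commute algebra_simps fun_eq_iff)
qed


lemma term_bound:
  fixes xi xj xl vi vj vl :: "'a::real_normed_vector"
  assumes Lip: "\<bar>p (norm (xi - xl)) - p (norm (xj - xl))\<bar> \<le> L * \<bar>norm (xi - xl) - norm (xj - xl)\<bar>"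
    and L: "L \<ge> 0" and Pb: "\<bar>p (norm (xj - xl))\<bar> \<le> P"
    and vb: "norm vi \<le> Vm" "norm vl \<le> Vm"
  shows "norm (p (norm (xi - xl)) *\<^sub>R (vl - vi) - p (norm (xj - xl)) *\<^sub>R (vl - vj))
     \<le> 2 * L * Vm * norm (xi - xj) + P * norm (vi - vj)"
proof -
  have eq: "p (norm (xi - xl)) *\<^sub>R (vl - vi) - p (norm (xj - xl)) *\<^sub>R (vl - vj)
     = (p (norm (xi - xl)) - p (norm (xj - xl))) *\<^sub>R (vl - vi) - p (norm (xj - xl)) *\<^sub>R (vi - vj)"
    by (simp add: algebra_simps)
  have n1: "\<bar>norm (xi - xl) - norm (xj - xl)\<bar> \<le> norm (xi - xj)"
    using norm_triangle_ineq3[of "xi - xl" "xj - xl"] by simp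
  have n2: "norm (vl - vi) \<le> 2 * Vm" using norm_triangle_ineq4[of vl vi] vb by simp
  have "norm ((p (norm (xi - xl)) - p (norm (xj - xl))) *\<^sub>R (vl - vi))
      \<le> (L * norm (xi - xj)) * (2 * Vm)"
    unfolding norm_scaleR
    apply (rule mult_mono)
    using Lip n1 L n2 by (auto intro: order_trans mult_left_mono)
  moreover have "norm (p (norm (xj - xl)) *\<^sub>R (vi - vj)) \<le> P * norm (vi - vj)"
    unfolding norm_scaleR using Pb by (simp add: mult_right_mono)
  ultimately show ?thesis unfolding eq
    using norm_triangle_ineq4[of "(p (norm (xi - xl)) - p (norm (xj - xl))) *\<^sub>R (vl - vi)" "p (norm (xj - xl)) *\<^sub>R (vi - vj)"]
    by (simp add: algebra_simps)
qed

lemma pair_ode_zero: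
  fixes X V :: "real \<Rightarrow> 'i::finite \<Rightarrow> 'a::real_inner" and p :: "real \<Rightarrow> real"
  assumes Xd: "\<And>k t. t\<in>{0..T} \<Longrightarrow> ((\<lambda>s. X s k) has_vector_derivative V t k) (at t within {0..T})"
    and Vd: "\<And>k t. t\<in>{0..T} \<Longrightarrow> ((\<lambda>s. V s k) has_vector_derivative
        (1/real CARD('i)) *\<^sub>R (\<Sum>l\<in>UNIV. p (norm (X t k - X t l)) *\<^sub>R (V t l - V t k))) (at t within {0..T})"
    and Lip: "\<And>s1 s2. s1\<in>{0..R} \<Longrightarrow> s2\<in>{0..R} \<Longrightarrow> \<bar>p s1 - p s2\<bar> \<le> L*\<bar>s1-s2\<bar>"
    and L: "L \<ge> 0"
    and Pb: "\<And>s. s\<in>{0..R} \<Longrightarrow> \<bar>p s\<bar> \<le> P" and P: "P \<ge> 0"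
    and Rb: "\<And>t k l. t\<in>{0..T} \<Longrightarrow> norm (X t k - X t l) \<le> R"
    and Vb: "\<And>t k. t\<in>{0..T} \<Longrightarrow> norm (V t k) \<le> Vm"
    and i0: "X 0 i = X 0 j" "V 0 i = V 0 j"
    and t: "t \<in> {0..T}"
  shows "X t i = X t j \<and> V t i = V t j"
proof -
  define D where "D s = X s i - X s j" for s
  define E where "E s = V s i - V s j" for s
  define A where "A s k = (1/real CARD('i)) *\<^sub>R (\<Sum>l\<in>UNIV. p (norm (X s k - X s l)) *\<^sub>R (V s l - V s k))" for s k
  define f where "f s = D s \<bullet> D s + E s \<bullet> E s" for s
  define f' where "f' s = 2 * (D s \<bullet> E s) + 2 * (E s \<bullet> (A s i - A s j))" for s
  define K where "K = 1 + 2 * L * Vm + 2 * P"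
  have fd: "(f has_real_derivative f' s) (at s within {0..T})" if s: "s \<in> {0..T}" for s
  proof -
    have "(D has_vector_derivative E s) (at s within {0..T})"
      unfolding D_def E_def using Xd[OF s] by (intro derivative_intros) auto
    moreover have "(E has_vector_derivative (A s i - A s j)) (at s within {0..T})"
      unfolding E_def A_def using Vd[OF s] by (intro derivative_intros) auto
    ultimately show ?thesis unfolding f_def f'_def
      by (intro derivative_intros inner_deriv)
  qed
  have Eb: "norm (A s i - A s j) \<le> 2 * L * Vm * norm (D s) + P * norm (E s)" if s: "s \<in> {0..T}" for s
  proof -
    have "A s i - A s j = (1/real CARD('i)) *\<^sub>R (\<Sum>l\<in>UNIV.
         p (norm (X s i - X s l)) *\<^sub>R (V s l - V s i) - p (norm (X s j - X s l)) *\<^sub>R (V s l - V s j))"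
      unfolding A_def by (simp add: sum_subtractf scaleR_diff_right)
    also have "norm \<dots> \<le> (1/real CARD('i)) * (\<Sum>l\<in>(UNIV::'i set). 2 * L * Vm * norm (D s) + P * norm (E s))"
      unfolding norm_scaleR abs_of_nonneg[of "1 / real CARD('i)", OF divide_nonneg_nonneg[OF zero_le_one of_nat_0_le_iff]]
      apply (rule mult_left_mono[rotated], simp)
      apply (rule order_trans[OF norm_sum])
      apply (rule sum_mono)
      unfolding D_def E_def
      apply (rule term_bound)
      using Lip Rb[OF s] L Pb Vb[OF s] by auto
    also have "\<dots> = 2 * L * Vm * norm (D s) + P * norm (E s)" by simp
    finally show ?thesis .
  qed
  have le: "f' s \<le> K * f s" if s: "s \<in> {0..T}" for s
  proof -
    define a where "a = norm (D s)"
    define b where "b = norm (E s)"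
    have ab: "a \<ge> 0" "b \<ge> 0" unfolding a_def b_def by auto
    have "f' s \<le> 2 * (a * b) + 2 * (b * (2 * L * Vm * a + P * b))"
    proof -
      have "D s \<bullet> E s \<le> a * b" unfolding a_def b_def by (rule Cauchy_Schwarz_ineq2[THEN abs_le_D1])
      moreover have "E s \<bullet> (A s i - A s j) \<le> b * norm (A s i - A s j)"
        unfolding b_def by (rule Cauchy_Schwarz_ineq2[THEN abs_le_D1])
      moreover have "b * norm (A s i - A s j) \<le> b * (2 * L * Vm * a + P * b)"
        using Eb[OF s] ab unfolding a_def b_def by (simp add: mult_left_mono)
      ultimately show ?thesis unfolding f'_def by linarith
    qed
    also have "\<dots> \<le> K * (a*a + b*b)"
    proof -
      have sq: "(a-b)*(a-b) = a*a + b*b - 2*(a*b)" by (simp add: algebra_simps)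
      have "0 \<le> (a-b)*(a-b)" by simp
      then have h1: "2 * (a*b) \<le> a*a + b*b" using sq by linarith
      define c where "c = 2 * L * Vm"
      have "0 \<le> Vm" using Vb[OF s] norm_ge_zero order_trans by blast
      then have c0: "0 \<le> c" unfolding c_def using L by simp
      have h2: "c * (2 * (a*b)) \<le> c * (a*a + b*b)" using h1 c0 by (rule mult_left_mono)
      have h3: "0 \<le> 2*P*(a*a)" using P by simp
      have e1: "2 * (a * b) + 2 * (b * (2 * L * Vm * a + P * b)) = 2*(a*b) + c * (2*(a*b)) + 2*P*(b*b)"
        unfolding c_def by (simp add: algebra_simps)
      have e2: "K * (a*a + b*b) = (a*a+b*b) + c*(a*a+b*b) + 2*P*(a*a) + 2*P*(b*b)"
        unfolding c_def K_def by (simp add: algebra_simps)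
      show ?thesis unfolding e1 e2 using h1 h2 h3 by linarith
    qed
    also have "a*a + b*b = f s" unfolding a_def b_def f_def by (simp add: inner_commute power2_norm_eq_inner[symmetric] power2_eq_square)
    finally show ?thesis .
  qed
  have "f t = 0"
    apply (rule gronwall_zero[of 0 T f f' K])
    using t fd le i0 by (auto simp: f_def D_def E_def)
  moreover have "0 \<le> D t \<bullet> D t" "0 \<le> E t \<bullet> E t" by auto
  ultimately have "D t \<bullet> D t = 0" "E t \<bullet> E t = 0" unfolding f_def by linarith+
  then show ?thesis unfolding D_def E_def by simp
qed


lemma w_equal:
  fixes w :: "real \<Rightarrow> 'i \<Rightarrow> 'a::real_inner" and q :: "real \<Rightarrow> 'i \<Rightarrow> 'i \<Rightarrow> real"
  assumes wd: "\<And>k t. k\<in>{i,j} \<Longrightarrow> t\<in>{a..b} \<Longrightarrow>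
      ((\<lambda>s. w s k) has_vector_derivative c *\<^sub>R (\<Sum>l\<in>C. q t k l *\<^sub>R (w t l - w t k))) (at t within {a..b})"
    and qeq: "\<And>t l. t\<in>{a..b} \<Longrightarrow> q t i l = q t j l"
    and qnn: "\<And>t l. t\<in>{a..b} \<Longrightarrow> 0 \<le> q t i l"
    and c: "0 \<le> c" and w0: "w a i = w a j" and ab: "a \<le> b" and t: "t \<in> {a..b}"
  shows "w t i = w t j"
proof -
  define W where "W s = w s i - w s j" for s
  define g where "g s = W s \<bullet> W s" for s
  define g' where "g' s = 2 * (W s \<bullet> (- (c * (\<Sum>l\<in>C. q s i l)) *\<^sub>R W s))" for s
  have gd: "(g has_real_derivative g' s) (at s within {a..b})" if s: "s \<in> {a..b}" for s
  proof -
    have "(W has_vector_derivative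
        c *\<^sub>R (\<Sum>l\<in>C. q s i l *\<^sub>R (w s l - w s i)) - c *\<^sub>R (\<Sum>l\<in>C. q s j l *\<^sub>R (w s l - w s j))) (at s within {a..b})"
      unfolding W_def using wd[OF _ s] by (intro derivative_intros) auto
    moreover have "c *\<^sub>R (\<Sum>l\<in>C. q s i l *\<^sub>R (w s l - w s i)) - c *\<^sub>R (\<Sum>l\<in>C. q s j l *\<^sub>R (w s l - w s j))
        = (- (c * (\<Sum>l\<in>C. q s i l))) *\<^sub>R W s"
    proof -
      have "(\<Sum>l\<in>C. q s j l *\<^sub>R (w s l - w s i)) - (\<Sum>l\<in>C. q s j l *\<^sub>R (w s l - w s j))
          = (\<Sum>l\<in>C. q s j l *\<^sub>R ((w s l - w s i) - (w s l - w s j)))"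
        unfolding sum_subtractf[symmetric] scaleR_diff_right ..
      also have "\<dots> = (\<Sum>l\<in>C. q s j l) *\<^sub>R (w s j - w s i)"
        by (simp add: scaleR_sum_left)
      finally have e: "(\<Sum>l\<in>C. q s j l *\<^sub>R (w s l - w s i)) - (\<Sum>l\<in>C. q s j l *\<^sub>R (w s l - w s j))
          = (\<Sum>l\<in>C. q s j l) *\<^sub>R (w s j - w s i)" .
      have "c *\<^sub>R (\<Sum>l\<in>C. q s j l *\<^sub>R (w s l - w s i)) - c *\<^sub>R (\<Sum>l\<in>C. q s j l *\<^sub>R (w s l - w s j))
          = c *\<^sub>R ((\<Sum>l\<in>C. q s j l) *\<^sub>R (w s j - w s i))"
        unfolding e[symmetric] by (simp only: scaleR_diff_right)
      also have "\<dots> = (- (c * (\<Sum>l\<in>C. q s j l))) *\<^sub>R (w s i - w s j)"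
        by (simp add: scaleR_diff_right)
      finally show ?thesis unfolding W_def qeq[OF s] .
    qed
    ultimately show ?thesis unfolding g_def g'_def by (intro inner_deriv) auto
  qed
  have "g' s \<le> 0 * g s" if s: "s \<in> {a..b}" for s
  proof -
    have "0 \<le> c * (\<Sum>l\<in>C. q s i l)" using c qnn[OF s] by (simp add: sum_nonneg)
    then show ?thesis unfolding g'_def g_def by (simp add: mult_nonneg_nonneg)
  qed
  moreover have "g a = 0" unfolding g_def W_def w0 by simp
  moreover have "\<And>s. s \<in> {a..b} \<Longrightarrow> 0 \<le> g s" unfolding g_def by simp
  ultimately have "g t = 0"
    using gronwall_zero[OF ab gd, of 0] t by blast
  then show ?thesis unfolding g_def W_def by simp
qed


lemma energy_bound:
  fixes w :: "real \<Rightarrow> 'i::finite \<Rightarrow> 'a::real_inner" and q :: "real \<Rightarrow> 'i \<Rightarrow> 'i \<Rightarrow> real"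
  assumes wd: "\<And>k t. k\<in>C \<Longrightarrow> t\<in>{a..b} \<Longrightarrow>
      ((\<lambda>s. w s k) has_vector_derivative c *\<^sub>R (\<Sum>l\<in>C. q t k l *\<^sub>R (w t l - w t k))) (at t within {a..b})"
    and qsym: "\<And>t k l. t\<in>{a..b} \<Longrightarrow> q t k l = q t l k"
    and qnn: "\<And>t k l. t\<in>{a..b} \<Longrightarrow> 0 \<le> q t k l"
    and c: "0 < c" and ij: "i \<in> C" "j \<in> C" and ab: "a \<le> b"
    and eps: "\<And>t. t\<in>{a..b} \<Longrightarrow> \<epsilon> \<le> norm (w t i - w t j)" and e0: "0 < \<epsilon>"
  shows "(\<integral>\<^sup>+ s. ennreal (q s i j) * indicator {a..b} s \<partial>lborel)
           \<le> ennreal ((\<Sum>k\<in>C. w a k \<bullet> w a k) / (c * \<epsilon>\<^sup>2))"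
proof -
  define A where "A t k = c *\<^sub>R (\<Sum>l\<in>C. q t k l *\<^sub>R (w t l - w t k))" for t k
  define E where "E s = (\<Sum>k\<in>C. w s k \<bullet> w s k)" for s
  define E' where "E' s = (\<Sum>k\<in>C. 2 * (w s k \<bullet> A s k))" for s
  have Ed: "(E has_vector_derivative E' s) (at s within {a..b})" if s: "s \<in> {a..b}" for s
  proof -
    have "(E has_real_derivative E' s) (at s within {a..b})"
      unfolding E_def E'_def
      apply (rule DERIV_sum)
      apply (rule inner_deriv)
      using wd[OF _ s] unfolding A_def by auto
    then show ?thesis by (simp add: has_real_derivative_iff_has_vector_derivative)
  qed
  have fin: "finite C" by simp
  have E'eq: "E' s = - c * (\<Sum>k\<in>C. \<Sum>l\<in>C. q s k l * ((w s l - w s k) \<bullet> (w s l - w s k)))"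
    if s: "s \<in> {a..b}" for s
  proof -
    define S1 where "S1 = (\<Sum>k\<in>C. \<Sum>l\<in>C. q s k l * (w s k \<bullet> (w s l - w s k)))"
    define S2 where "S2 = (\<Sum>k\<in>C. \<Sum>l\<in>C. q s k l * (w s l \<bullet> (w s k - w s l)))"
    define T where "T = (\<Sum>k\<in>C. \<Sum>l\<in>C. q s k l * ((w s l - w s k) \<bullet> (w s l - w s k)))"
    have "E' s = 2 * c * S1"
      unfolding E'_def A_def S1_def
      by (simp add: inner_sum_right sum_distrib_left mult.assoc)
    moreover have "S1 = S2"
      unfolding S1_def S2_def
      by (subst sum.swap) (simp add: qsym[OF s])
    moreover have "S1 + S2 = - T"
      unfolding S1_def S2_def T_def sum.distrib[symmetric] sum_negf[symmetric]
      by (intro sum.cong refl) (simp add: algebra_simps inner_diff_left inner_diff_right inner_commute)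
    ultimately have "S1 = - T / 2" "E' s = 2 * c * S1" by linarith+
    then show ?thesis unfolding T_def[symmetric] by simp
  qed
  define G where "G s = - E' s / (c * \<epsilon>\<^sup>2)" for s
  have qG: "q s i j \<le> G s" if s: "s \<in> {a..b}" for s
  proof -
    have nn: "0 \<le> q s k l * ((w s l - w s k) \<bullet> (w s l - w s k))" for k l
      using qnn[OF s] by simp
    have "q s i j * ((w s j - w s i) \<bullet> (w s j - w s i)) \<le> (\<Sum>l\<in>C. q s i l * ((w s l - w s i) \<bullet> (w s l - w s i)))"
      using ij nn by (intro member_le_sum) auto
    also have "\<dots> \<le> (\<Sum>k\<in>C. \<Sum>l\<in>C. q s k l * ((w s l - w s k) \<bullet> (w s l - w s k)))"
      using ij nn by (intro member_le_sum[of i C "\<lambda>k. \<Sum>l\<in>C. q s k l * ((w s l - w s k) \<bullet> (w s l - w s k))"] sum_nonneg) auto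
    finally have h1: "q s i j * ((w s j - w s i) \<bullet> (w s j - w s i)) \<le> - E' s / c"
      using E'eq[OF s] c by simp
    have "\<epsilon>\<^sup>2 \<le> (w s j - w s i) \<bullet> (w s j - w s i)"
      using eps[OF s] e0 by (simp add: power2_norm_eq_inner[symmetric] norm_minus_commute power_mono)
    then have "q s i j * \<epsilon>\<^sup>2 \<le> q s i j * ((w s j - w s i) \<bullet> (w s j - w s i))"
      using qnn[OF s] by (simp add: mult_left_mono)
    then have "q s i j * \<epsilon>\<^sup>2 \<le> - E' s / c" using h1 by linarith
    then show ?thesis unfolding G_def using c e0
      by (simp add: field_simps)
  qed
  have GI: "(G has_integral (E a - E b) / (c * \<epsilon>\<^sup>2)) {a..b}"
  proof -
    have "(E' has_integral E b - E a) {a..b}"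
      by (rule fundamental_theorem_of_calculus[OF ab Ed])
    then have "((\<lambda>s. (- 1 / (c * \<epsilon>\<^sup>2)) * E' s) has_integral (- 1 / (c * \<epsilon>\<^sup>2)) * (E b - E a)) {a..b}"
      by (rule has_integral_mult_right)
    moreover have "(- 1 / (c * \<epsilon>\<^sup>2)) * (E b - E a) = (E a - E b) / (c * \<epsilon>\<^sup>2)"
      by (simp add: divide_simps)
    moreover have "(\<lambda>s. (- 1 / (c * \<epsilon>\<^sup>2)) * E' s) = G"
      unfolding G_def by (auto simp: fun_eq_iff)
    ultimately show ?thesis by simp
  qed
  have Gnn: "0 \<le> G s" if "s \<in> {a..b}" for s using qG[OF that] qnn[OF that, of i j] by linarith
  have "(\<integral>\<^sup>+ s. ennreal (indicator {a..b} s * G s) \<partial>lborel) = ennreal ((E a - E b) / (c * \<epsilon>\<^sup>2))"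
    by (rule nn_integral_has_integral_lebesgue[OF Gnn GI])
  moreover have "(\<integral>\<^sup>+ s. ennreal (q s i j) * indicator {a..b} s \<partial>lborel)
      \<le> (\<integral>\<^sup>+ s. ennreal (indicator {a..b} s * G s) \<partial>lborel)"
    by (intro nn_integral_mono) (auto simp: indicator_def qG ennreal_leI)
  moreover have "(E a - E b) / (c * \<epsilon>\<^sup>2) \<le> E a / (c * \<epsilon>\<^sup>2)"
    using c e0 unfolding E_def by (intro divide_right_mono) (auto intro!: sum_nonneg)
  ultimately show ?thesis unfolding E_def
    by (metis (no_types, lifting) ennreal_leI order_trans)
qed


lemma psi_meas: "psi \<alpha> \<in> borel_measurable borel"
  unfolding psi_def by measurable
lemma meas_psi:
  fixes X :: "real \<Rightarrow> 'a::real_normed_vector"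
  assumes "continuous_on {a..b} X"
  shows "(\<lambda>s. ennreal (psi \<alpha> (norm (X s))) * indicator {a..b} s) \<in> borel_measurable lborel"
proof -
  define Y where "Y s = indicator {a..b} s *\<^sub>R X s" for s
  have Y: "Y \<in> borel_measurable borel" unfolding Y_def
    by (rule borel_measurable_continuous_on_indicator) (use assms in auto)
  have eq: "(\<lambda>s. ennreal (psi \<alpha> (norm (X s))) * indicator {a..b} s)
      = (\<lambda>s. ennreal (psi \<alpha> (norm (Y s))) * indicator {a..b} s)"
    by (auto simp: fun_eq_iff Y_def indicator_def)
  have "(\<lambda>s. ennreal (psi \<alpha> (norm (Y s))) * indicator {a..b} s) \<in> borel_measurable borel"
    using Y psi_meas by measurable
  then show ?thesis unfolding eq by (simp add: measurable_cong_sets[OF sets_lborel refl])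
qed
lemma bound_fin:
  fixes f :: "real \<Rightarrow> 'i::finite \<Rightarrow> 'a::real_normed_vector"
  assumes "\<And>k. continuous_on S (\<lambda>t. f t k)" "compact S"
  shows "\<exists>B. \<forall>t\<in>S. \<forall>k. norm (f t k) \<le> B"
proof -
  have "\<forall>k. \<exists>B. \<forall>t\<in>S. norm (f t k) \<le> B"
  proof
    fix k
    have "compact ((\<lambda>t. f t k) ` S)" using assms by (intro compact_continuous_image) auto
    then show "\<exists>B. \<forall>t\<in>S. norm (f t k) \<le> B"
      using compact_imp_bounded[THEN bounded_iff[THEN iffD1]] by fast
  qed
  then obtain Bf where Bf: "\<And>k t. t\<in>S \<Longrightarrow> norm (f t k) \<le> Bf k" by metis
  have "norm (f t k) \<le> (\<Sum>l\<in>UNIV. \<bar>Bf l\<bar>)" if "t\<in>S" for t k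
  proof -
    have "\<bar>Bf k\<bar> \<le> (\<Sum>l\<in>UNIV. \<bar>Bf l\<bar>)" by (rule member_le_sum) auto
    then show ?thesis using Bf[OF that, of k] by linarith
  qed
  then show ?thesis by blast
qed


theorem lemma2p3:
  fixes \<alpha> T T0 t0 :: real
    and psin :: "nat \<Rightarrow> real \<Rightarrow> real"
    and x0 v0 :: "'i::finite \<Rightarrow> real ^ 'd"
    and xs vs :: "nat \<Rightarrow> real \<Rightarrow> 'i \<Rightarrow> real ^ 'd"
    and r :: "nat \<Rightarrow> nat"
    and x v w :: "real \<Rightarrow> 'i \<Rightarrow> real ^ 'd"
    and i j :: 'i
  assumes alpha: "0 < \<alpha>" "\<alpha> < 1"
    and T_pos: "0 < T"
    \<comment> \<open>the regularized kernels psi_n, n \<ge> 2\<close>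
    and psin_far: "\<And>n s. n \<ge> 2 \<Longrightarrow> s \<ge> real (n - 1) powr (- 1 / \<alpha>) \<Longrightarrow> psin n s = psi \<alpha> s"
    and psin_near: "\<And>n s. n \<ge> 2 \<Longrightarrow> 0 \<le> s \<Longrightarrow> s \<le> real n powr (- 1 / \<alpha>) \<Longrightarrow> psin n s = real n"
    and psin_smooth: "\<And>n k s. n \<ge> 2 \<Longrightarrow> 0 < s \<Longrightarrow> ((deriv ^^ k) (psin n)) differentiable (at s)"
    and psin_mono: "\<And>n. n \<ge> 2 \<Longrightarrow> antimono_on {0..} (psin n)"
    \<comment> \<open>x^n, n \<ge> 2: C^2 solutions on [0,T] of the regularized system with the given data\<close>
    and xs_deriv: "\<And>n k t. n \<ge> 2 \<Longrightarrow> t \<in> {0..T} \<Longrightarrow>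
        ((\<lambda>s. xs n s k) has_vector_derivative vs n t k) (at t within {0..T})"
    and vs_deriv: "\<And>n k t. n \<ge> 2 \<Longrightarrow> t \<in> {0..T} \<Longrightarrow>
        ((\<lambda>s. vs n s k) has_vector_derivative
           (1 / real CARD('i)) *\<^sub>R (\<Sum>l\<in>UNIV. psin n (norm (xs n t k - xs n t l)) *\<^sub>R (vs n t l - vs n t k)))
         (at t within {0..T})"
    and xs_init: "\<And>n. n \<ge> 2 \<Longrightarrow> xs n 0 = x0"
    and vs_init: "\<And>n. n \<ge> 2 \<Longrightarrow> vs n 0 = v0"
    \<comment> \<open>subsequence converging uniformly on [0,T] to x\<close>
    and r_mono: "strict_mono r"
    and r_ge: "\<And>k. r k \<ge> 2"
    and unif: "\<And>k. uniform_limit {0..T} (\<lambda>n t. xs (r n) t k) (\<lambda>t. x t k) sequentially"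
    \<comment> \<open>definition of T0, and T0 \<le> T\<close>
    and T0_set_ne: "{t \<in> {0<..T}. \<exists>k. \<exists>l\<in>Bset x0 v0 k.
                      lim (\<lambda>n. norm (xs (r n) t k - xs (r n) t l)) = 0} \<noteq> {}"
    and T0_def: "T0 = Inf {t \<in> {0<..T}. \<exists>k. \<exists>l\<in>Bset x0 v0 k.
                      lim (\<lambda>n. norm (xs (r n) t k - xs (r n) t l)) = 0}"
    \<comment> \<open>C^1 convergence on [0,t] for every t < T0, with v = x' on [0,T0)\<close>
    and x_deriv: "\<And>k t. t \<in> {0..<T0} \<Longrightarrow>
        ((\<lambda>s. x s k) has_vector_derivative v t k) (at t within {0..<T0})"
    and unif_v: "\<And>k t. t \<in> {0..<T0} \<Longrightarrow>
        uniform_limit {0..t} (\<lambda>n s. vs (r n) s k) (\<lambda>s. v s k) sequentially"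
    \<comment> \<open>w = w^(t0)\<close>
    and t0: "0 < t0" "t0 < T0"
    and w_deriv: "\<And>k t. t \<in> {t0..<T0} \<Longrightarrow>
        ((\<lambda>s. w s k) has_vector_derivative
           (1 / real CARD('i)) *\<^sub>R (\<Sum>l\<in>simclass \<alpha> x0 v0 x T0 k.
               psi \<alpha> (norm (x t k - x t l)) *\<^sub>R (w t l - w t k)))
         (at t within {t0..<T0})"
    and w_init: "\<And>k. w t0 k = v t0 k"
    and ij: "dotsim \<alpha> x0 v0 x T0 i j"
  shows "\<exists>s :: nat \<Rightarrow> real. (\<forall>n. s n \<in> {t0..<T0}) \<and> s \<longlonglongrightarrow> T0 \<and>
           (\<lambda>n. norm (w (s n) i - w (s n) j)) \<longlonglongrightarrow> 0"
proof -
  define N where "N = real CARD('i)"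
  have N0: "0 < N" unfolding N_def by simp
  define C where "C = simclass \<alpha> x0 v0 x T0 i"
  have simeq: "simclass \<alpha> x0 v0 x T0 k = C" if "k \<in> C" for k
  proof -
    have ik: "simrel \<alpha> x0 v0 x T0 i k" using that unfolding C_def simclass_def by simp
    show ?thesis unfolding C_def simclass_def
      using ik unfolding simrel_def
      by (auto intro: equivclp_trans equivclp_sym)
  qed
  have iC: "i \<in> C" unfolding C_def simclass_def simrel_def by (simp add: equivclp_refl)
  have jC: "j \<in> C" unfolding C_def simclass_def simrel_def using ij by (simp add: r_into_equivclp)
  have T0T: "T0 \<le> T"
  proof -
    obtain t where "t \<in> {t \<in> {0<..T}. \<exists>k. \<exists>l\<in>Bset x0 v0 k.
                      lim (\<lambda>n. norm (xs (r n) t k - xs (r n) t l)) = 0}" using T0_set_ne by blast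
    then show ?thesis unfolding T0_def
      by (intro order_trans[OF cInf_lower]) (auto intro!: bdd_belowI[where m=0])
  qed
  have psi_nn: "0 \<le> psi \<alpha> s" for s unfolding psi_def by simp
  have wd': "((\<lambda>s. w s k) has_vector_derivative
           (1 / N) *\<^sub>R (\<Sum>l\<in>C. psi \<alpha> (norm (x t k - x t l)) *\<^sub>R (w t l - w t k))) (at t within {a..b})"
    if "k \<in> C" "t \<in> {a..b}" "t0 \<le> a" "b < T0" for k t a b
    using w_deriv[of t k] simeq[OF that(1)] that unfolding N_def
    by (auto intro: has_vector_derivative_within_subset)
  have xcont: "continuous_on {0..<T0} (\<lambda>s. x s k)" for k
    unfolding continuous_on_eq_continuous_within
    using x_deriv has_vector_derivative_continuous by blast
  have key: "\<exists>s. t0 \<le> s \<and> \<tau> < s \<and> s < T0 \<and> norm (w s i - w s j) < \<epsilon>" if e0: "0 < \<epsilon>" and tau: "\<tau> < T0" for \<epsilon> \<tau>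
  proof (cases "j \<in> Bset x0 v0 i")
    case False
    then have init: "x0 i = x0 j" "v0 i = v0 j" unfolding Bset_def by auto
    have eqn: "xs (r m) t i = xs (r m) t j \<and> vs (r m) t i = vs (r m) t j" if t: "t \<in> {0..T}" for m t
    proof -
      define n where "n = r m"
      have n2: "n \<ge> 2" unfolding n_def using r_ge by simp
      have xc: "continuous_on {0..T} (\<lambda>t. xs n t k)" for k
        unfolding continuous_on_eq_continuous_within
        using xs_deriv[OF n2] has_vector_derivative_continuous by blast
      have vc: "continuous_on {0..T} (\<lambda>t. vs n t k)" for k
        unfolding continuous_on_eq_continuous_within
        using vs_deriv[OF n2] has_vector_derivative_continuous by blast
      obtain Bx where Bx: "\<And>t k. t \<in> {0..T} \<Longrightarrow> norm (xs n t k) \<le> Bx"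
        using bound_fin[of "{0..T}" "xs n", OF xc] by blast
      obtain Bv where Bv: "\<And>t k. t \<in> {0..T} \<Longrightarrow> norm (vs n t k) \<le> Bv"
        using bound_fin[of "{0..T}" "vs n", OF vc] by blast
      define R where "R = 2 * Bx"
      have Rb: "norm (xs n t k - xs n t l) \<le> R" if "t \<in> {0..T}" for t k l
        using norm_triangle_ineq4[of "xs n t k" "xs n t l"] Bx[OF that, of k] Bx[OF that, of l]
        unfolding R_def by linarith
      have apos: "0 < real n powr (- 1 / \<alpha>)" using n2 by simp
      obtain L where L: "L \<ge> 0" and Lip: "\<And>s1 s2. s1\<in>{0..R} \<Longrightarrow> s2\<in>{0..R} \<Longrightarrow> \<bar>psin n s1 - psin n s2\<bar> \<le> L * \<bar>s1 - s2\<bar>"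
      proof -
        have "\<exists>L\<ge>0. \<forall>s1\<in>{0..R}. \<forall>s2\<in>{0..R}. \<bar>psin n s1 - psin n s2\<bar> \<le> L * \<bar>s1 - s2\<bar>"
        proof (rule lipschitz_aux[OF apos])
          show "psin n s = real n" if "0 \<le> s" "s \<le> real n powr (- 1 / \<alpha>)" for s
            using psin_near[OF n2 that] .
          show "psin n differentiable at s" if "0 < s" for s
            using psin_smooth[OF n2 that, of 0] by simp
          show "deriv (psin n) differentiable at s" if "0 < s" for s
            using psin_smooth[OF n2 that, of 1] by simp
        qed
        then show ?thesis using that by blast
      qed
      have R0: "0 \<le> R" using Rb[of 0 i i] T_pos by simp
      define P where "P = \<bar>psin n 0\<bar> + L * R"
      have P0: "0 \<le> P" unfolding P_def using L R0 by simp
      have Pb: "\<bar>psin n s\<bar> \<le> P" if "s \<in> {0..R}" for s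
      proof -
        have "\<bar>psin n s - psin n 0\<bar> \<le> L * \<bar>s - 0\<bar>" using Lip[OF that, of 0] R0 by simp
        moreover have "L * \<bar>s - 0\<bar> \<le> L * R" using that L by (simp add: mult_left_mono)
        ultimately show ?thesis unfolding P_def by linarith
      qed
      have "xs n t i = xs n t j \<and> vs n t i = vs n t j"
        by (rule pair_ode_zero[where X="xs n" and V="vs n" and p="psin n", OF xs_deriv[OF n2] vs_deriv[OF n2] Lip L Pb P0 Rb Bv])
          (use init xs_init[OF n2] vs_init[OF n2] t in auto)
      then show ?thesis unfolding n_def .
    qed
    have xeq: "x t i = x t j" if "t \<in> {0..T}" for t
    proof -
      have "(\<lambda>m. xs (r m) t i) \<longlonglongrightarrow> x t i" "(\<lambda>m. xs (r m) t j) \<longlonglongrightarrow> x t j"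
        using tendsto_uniform_limitI[OF unif that] by auto
      then show ?thesis using eqn[OF that] by (auto intro: LIMSEQ_unique)
    qed
    have veq: "v t i = v t j" if "t \<in> {0..<T0}" for t
    proof -
      have "t \<in> {0..t}" using that by auto
      then have "(\<lambda>m. vs (r m) t i) \<longlonglongrightarrow> v t i" "(\<lambda>m. vs (r m) t j) \<longlonglongrightarrow> v t j"
        using tendsto_uniform_limitI[OF unif_v[OF that]] by auto
      moreover have "t \<in> {0..T}" using that T0T by auto
      ultimately show ?thesis using eqn by (auto intro: LIMSEQ_unique)
    qed
    define s where "s = (max \<tau> t0 + T0) / 2"
    have s: "t0 \<le> s" "\<tau> < s" "s < T0" unfolding s_def using tau t0 by auto
    have "w s i = w s j"
    proof (rule w_equal[where a=t0 and b=s and C=C and c="1/N" and q="\<lambda>t k l. psi \<alpha> (norm (x t k - x t l))"])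
      show "((\<lambda>s. w s k) has_vector_derivative
           (1 / N) *\<^sub>R (\<Sum>l\<in>C. psi \<alpha> (norm (x t k - x t l)) *\<^sub>R (w t l - w t k))) (at t within {t0..s})"
        if "k \<in> {i, j}" "t \<in> {t0..s}" for k t
        using wd'[of k t t0 s] that iC jC s by auto
      show "psi \<alpha> (norm (x t i - x t l)) = psi \<alpha> (norm (x t j - x t l))" if "t \<in> {t0..s}" for t l
        using xeq[of t] that s t0 T0T by auto
      show "0 \<le> psi \<alpha> (norm (x t i - x t l))" for t l by (rule psi_nn)
      show "0 \<le> 1 / N" using N0 by simp
      show "w t0 i = w t0 j" using w_init veq[of t0] t0 by auto
    qed (use s in auto)
    then show ?thesis using s e0 by auto
  next
    case True
    have inf: "(\<integral>\<^sup>+ s\<in>{t..<T0}. ennreal (psi \<alpha> (norm (x s i - x s j))) \<partial>lborel) = \<infinity>"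
      if "t \<in> {0..<T0}" for t
      using ij True that unfolding dotsim_def by auto
    show ?thesis
    proof (rule ccontr)
      assume "\<not> ?thesis"
      then have ge: "\<And>s. t0 \<le> s \<Longrightarrow> \<tau> < s \<Longrightarrow> s < T0 \<Longrightarrow> \<epsilon> \<le> norm (w s i - w s j)"
        by (auto simp: not_less)
      define t1 where "t1 = (max \<tau> t0 + T0) / 2"
      have t1: "t0 \<le> t1" "\<tau> < t1" "t1 < T0" unfolding t1_def using tau t0 by auto
      define B where "B = (\<Sum>k\<in>C. w t1 k \<bullet> w t1 k) / ((1/N) * \<epsilon>\<^sup>2)"
      have bnd: "(\<integral>\<^sup>+ s. ennreal (psi \<alpha> (norm (x s i - x s j))) * indicator {t1..b} s \<partial>lborel) \<le> ennreal B"
        if b: "t1 \<le> b" "b < T0" for b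
        unfolding B_def
      proof (rule energy_bound[where q="\<lambda>t k l. psi \<alpha> (norm (x t k - x t l))"])
        show "((\<lambda>s. w s k) has_vector_derivative
           (1 / N) *\<^sub>R (\<Sum>l\<in>C. psi \<alpha> (norm (x t k - x t l)) *\<^sub>R (w t l - w t k))) (at t within {t1..b})"
          if "k \<in> C" "t \<in> {t1..b}" for k t
          using wd'[of k t t1 b] that t1 b by auto
        show "psi \<alpha> (norm (x t k - x t l)) = psi \<alpha> (norm (x t l - x t k))" for t k l
          by (simp add: norm_minus_commute)
        show "0 \<le> psi \<alpha> (norm (x t k - x t l))" for t k l by (rule psi_nn)
        show "\<epsilon> \<le> norm (w t i - w t j)" if "t \<in> {t1..b}" for t
          using ge[of t] that t1 b by auto
      qed (use N0 iC jC b e0 in auto)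
      define bm where "bm m = T0 - (T0 - t1) / real (Suc m)" for m
      have bm: "t1 \<le> bm m" "bm m < T0" for m
      proof -
        have "(T0 - t1) / real (Suc m) \<le> T0 - t1" using t1 by (simp add: divide_le_eq)
        then show "t1 \<le> bm m" unfolding bm_def by simp
        show "bm m < T0" unfolding bm_def using t1 by simp
      qed
      define fm where "fm m s = ennreal (psi \<alpha> (norm (x s i - x s j))) * indicator {t1..bm m} s" for m s
      have meas: "fm m \<in> borel_measurable lborel" for m
      proof -
        have "continuous_on {t1..bm m} (\<lambda>s. x s i - x s j)"
          apply (rule continuous_on_subset[OF continuous_on_diff[OF xcont xcont]])
          using bm[of m] t1 t0 by auto
        then show ?thesis unfolding fm_def[abs_def] by (rule meas_psi)
      qed
      have bmmono: "bm m \<le> bm m'" if "m \<le> m'" for m m'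
      proof -
        have "(T0 - t1) / real (Suc m') \<le> (T0 - t1) / real (Suc m)"
          using t1 that by (intro divide_left_mono) auto
        then show ?thesis unfolding bm_def by simp
      qed
      have inc: "incseq fm"
        unfolding incseq_def le_fun_def fm_def
        using bmmono by (auto simp: indicator_def) (meson bmmono order_trans)
      have sup: "(SUP m. fm m s) = ennreal (psi \<alpha> (norm (x s i - x s j))) * indicator {t1..<T0} s" for s
      proof (cases "s \<in> {t1..<T0}")
        case True
        obtain m where m: "(T0 - t1) / (T0 - s) < real m" using reals_Archimedean2 by blast
        have "T0 - s > 0" using True by simp
        then have "(T0 - t1) < real m * (T0 - s)" using m by (simp add: divide_less_eq)
        also have "\<dots> \<le> real (Suc m) * (T0 - s)" using \<open>T0 - s > 0\<close> by (intro mult_right_mono) auto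
        finally have "(T0 - t1) / real (Suc m) \<le> T0 - s" by (simp add: divide_le_eq mult.commute)
        then have "s \<le> bm m" unfolding bm_def by simp
        then have "fm m s = ennreal (psi \<alpha> (norm (x s i - x s j)))" unfolding fm_def using True by simp
        moreover have "fm m' s \<le> ennreal (psi \<alpha> (norm (x s i - x s j)))" for m'
          unfolding fm_def by (simp add: indicator_def)
        ultimately have "(SUP m. fm m s) = ennreal (psi \<alpha> (norm (x s i - x s j)))"
          by (intro antisym SUP_least) (auto intro: SUP_upper2[of m])
        then show ?thesis using True by simp
      next
        case False
        then have "fm m s = 0" for m unfolding fm_def using bm[of m] by (auto simp: indicator_def)
        then show ?thesis using False by simp
      qed
      have "(\<integral>\<^sup>+ s\<in>{t1..<T0}. ennreal (psi \<alpha> (norm (x s i - x s j))) \<partial>lborel) = (\<integral>\<^sup>+ s. (SUP m. fm m s) \<partial>lborel)"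
        by (simp add: sup)
      also have "\<dots> = (SUP m. integral\<^sup>N lborel (fm m))"
        by (rule nn_integral_monotone_convergence_SUP[OF inc meas])
      also have "\<dots> \<le> ennreal B"
        unfolding fm_def using bnd bm by (intro SUP_least) auto
      finally have "(\<integral>\<^sup>+ s\<in>{t1..<T0}. ennreal (psi \<alpha> (norm (x s i - x s j))) \<partial>lborel) \<le> ennreal B" .
      then have "(\<integral>\<^sup>+ s\<in>{t1..<T0}. ennreal (psi \<alpha> (norm (x s i - x s j))) \<partial>lborel) < \<infinity>"
        using le_less_trans[OF _ ennreal_less_top[of B]] by (simp add: infinity_ennreal_def)
      then have "(\<integral>\<^sup>+ s\<in>{t1..<T0}. ennreal (psi \<alpha> (norm (x s i - x s j))) \<partial>lborel) \<noteq> \<infinity>"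
        by simp
      moreover have "t1 \<in> {0..<T0}" using t1 t0 by auto
      ultimately show False using inf by blast
    qed
  qed
  have "\<forall>n. \<exists>s. t0 \<le> s \<and> T0 - 1 / real (Suc n) < s \<and> s < T0 \<and> norm (w s i - w s j) < 1 / real (Suc n)"
    using key by simp
  then obtain s where s: "\<And>n. t0 \<le> s n \<and> T0 - 1 / real (Suc n) < s n \<and> s n < T0 \<and> norm (w (s n) i - w (s n) j) < 1 / real (Suc n)"
    by metis
  have "(\<lambda>n. s n - T0) \<longlonglongrightarrow> 0"
  proof (rule LIMSEQ_norm_0)
    fix n
    have "T0 - 1 / real (Suc n) < s n" "s n < T0" using s[of n] by auto
    then show "norm (s n - T0) < 1 / real (Suc n)" by (simp add: abs_if)
  qed
  then have "s \<longlonglongrightarrow> T0" by (simp add: Lim_null[symmetric])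
  moreover have "(\<lambda>n. norm (w (s n) i - w (s n) j)) \<longlonglongrightarrow> 0"
    by (rule LIMSEQ_norm_0) (use s in auto)
  ultimately show ?thesis using s by auto
qed

end
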